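(* Let $k\in\mathbb{R}$, $a_1>0$, $c>0$ and $\gamma\ge 1$ be fixed, with $k\neq 0$ and $c^2\neq k^2a_1^2$, and let $c(k)$ denote a fixed (possibly complex) square root of $c^2-k^2a_1^2$ (so $c(k)\neq 0$). For $Pr>0$ consider the complex polynomial $$P(X)= X^{3} + 2\,i\,k\,a_1 \left( 1+\frac{3\,\gamma}{4\,Pr} \right)X^{2} - \left(c^{2} + \frac{3\,\gamma}{Pr}a_1^2\,k^2\right)X - i\,\frac{3\,k\,a_1\,c^2}{2\,Pr}.$$ Then, as $Pr\to\infty$ (all other parameters fixed), the three roots $X^{(-)}_{Pr},X^{(0)}_{Pr},X^{(+)}_{Pr}$ of $P$ depend smoothly on $1/Pr$ and satisfy $$X_{Pr}^{(\mp)}=-ik\,a_1 \mp c(k) \mp\frac{3\,(\gamma-1)\,k\,a_1\,(k\,a_1\pm i\,c(k))}{4\,c(k)}\frac{1}{Pr}+\mathcal{O}\!\left(\frac{1}{Pr^2}\right),$$ $$X_{Pr}^{(0)}=-i\,\frac{3\,k\,a_1}{2\,Pr}+\mathcal{O}\!\left(\frac{1}{Pr^2}\right).$$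
   Context: This polynomial is the dispersion relation $P(\omega/k)=0$ of the linearized 1D compressible Navier–Stokes equations, where $a_1=2\mu/(3\rho)$ ($\mu$ viscosity, $\rho$ density), $c$ is the adiabatic speed of sound, $\gamma=C_p/C_v$, and $Pr=\mu C_p/\lambda$ is the Prandtl number. In the formula for $X^{(\mp)}_{Pr}$, the upper signs give $X^{(-)}_{Pr}$ and the lower signs give $X^{(+)}_{Pr}$. *)

theory Defs
  imports "HOL-Analysis.Analysis" "HOL-Library.Landau_Symbols"
begin

definition disp_poly :: "real \<Rightarrow> real \<Rightarrow> real \<Rightarrow> real \<Rightarrow> real \<Rightarrow> complex \<Rightarrow> complex" where
  "disp_poly k a1 c \<gamma> Pr X =
     X ^ 3
     + 2 * \<i> * of_real k * of_real a1 * (1 + 3 * of_real \<gamma> / (4 * of_real Pr)) * X ^ 2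
     - (of_real c ^ 2 + 3 * of_real \<gamma> / of_real Pr * of_real a1 ^ 2 * of_real k ^ 2) * X
     - \<i> * (3 * of_real k * of_real a1 * of_real c ^ 2) / (2 * of_real Pr)"

definition smooth_on :: "real set \<Rightarrow> (real \<Rightarrow> complex) \<Rightarrow> bool" where
  "smooth_on S f \<longleftrightarrow> (\<exists>D :: nat \<Rightarrow> real \<Rightarrow> complex. D 0 = f \<and>
     (\<forall>n. \<forall>x\<in>S. (D n has_vector_derivative D (Suc n) x) (at x within S)))"

end

theory Submission
  imports Defs "HOL-Complex_Analysis.Complex_Analysis"
begin


lemma local_root:
  fixes Q R :: "complex \<Rightarrow> complex"
  assumes holQ: "Q holomorphic_on UNIV" and holR: "R holomorphic_on UNIV"
    and Q0: "Q \<xi> = 0" and R0: "R \<xi> \<noteq> 0"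
    and dQ: "(Q has_field_derivative q) (at \<xi>)" and q0: "q \<noteq> 0"
  shows "\<exists>\<delta>>0. \<exists>r. r holomorphic_on ball 0 \<delta> \<and> r 0 = \<xi> \<and> deriv r 0 = - R \<xi> / q \<and>
           (\<forall>e\<in>ball 0 \<delta>. Q (r e) + e * R (r e) = 0)"
proof -
  define S0 where "S0 = {z. R z \<noteq> 0}"
  have contR: "continuous_on UNIV R" using holR holomorphic_on_imp_continuous_on by blast
  have oS0: "open S0" unfolding S0_def
    using open_Collect_neq[of R "\<lambda>_. 0"] contR by (simp add: continuous_on_const)
  have xiS: "\<xi> \<in> S0" using R0 by (simp add: S0_def)
  define g where "g z = - Q z / R z" for z
  have holg: "g holomorphic_on S0" unfolding g_def S0_def
    by (intro holomorphic_intros holomorphic_on_subset[OF holQ] holomorphic_on_subset[OF holR]) auto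
  have dR: "(R has_field_derivative deriv R \<xi>) (at \<xi>)"
    using holR holomorphic_derivI by blast
  have "(g has_field_derivative (- q * R \<xi> - (- Q \<xi>) * deriv R \<xi>) / (R \<xi> * R \<xi>)) (at \<xi>)"
    unfolding g_def using DERIV_divide[OF DERIV_minus[OF dQ] dR R0] by simp
  then have dg: "(g has_field_derivative - q / R \<xi>) (at \<xi>)" using Q0 R0 by (simp add: field_simps)
  then have dg': "deriv g \<xi> = - q / R \<xi>" by (rule DERIV_imp_deriv)
  have dgnz: "deriv g \<xi> \<noteq> 0" using dg' q0 R0 by simp
  obtain \<rho> where \<rho>: "\<rho> > 0" "ball \<xi> \<rho> \<subseteq> S0" "inj_on g (ball \<xi> \<rho>)"
    using has_complex_derivative_locally_injective[OF holg xiS oS0 dgnz] by blast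
  have holgb: "g holomorphic_on ball \<xi> \<rho>" using holg \<rho>(2) holomorphic_on_subset by blast
  obtain h where h: "h holomorphic_on (g ` ball \<xi> \<rho>)"
     "\<And>z. z \<in> ball \<xi> \<rho> \<Longrightarrow> deriv g z * deriv h (g z) = 1"
     "\<And>z. z \<in> ball \<xi> \<rho> \<Longrightarrow> h (g z) = z"
    using holomorphic_has_inverse[OF holgb open_ball \<rho>(3)] by blast
  have og: "open (g ` ball \<xi> \<rho>)" using open_mapping_thm3[OF holgb open_ball \<rho>(3)] .
  have g0: "g \<xi> = 0" using Q0 by (simp add: g_def)
  have "0 \<in> g ` ball \<xi> \<rho>" using g0 \<rho>(1) by (metis centre_in_ball imageI)
  then obtain \<delta> where \<delta>: "\<delta> > 0" "ball 0 \<delta> \<subseteq> g ` ball \<xi> \<rho>"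
    using og open_contains_ball by blast
  show ?thesis
  proof (intro exI conjI allI ballI)
    show "\<delta> > 0" by fact
    show "h holomorphic_on ball 0 \<delta>" using h(1) \<delta>(2) holomorphic_on_subset by blast
    show "h 0 = \<xi>" using h(3)[of \<xi>] g0 \<rho>(1) by simp
    have "deriv g \<xi> * deriv h 0 = 1" using h(2)[of \<xi>] g0 \<rho>(1) by simp
    then have "- (q * deriv h 0) = R \<xi>" using dg' q0 R0 by (simp add: field_simps)
    then have "q * deriv h 0 = - R \<xi>" by (metis minus_minus)
    then show "deriv h 0 = - R \<xi> / q" using q0 by (simp add: field_simps)
    fix e :: complex assume e: "e \<in> ball 0 \<delta>"
    then obtain z where z: "z \<in> ball \<xi> \<rho>" "e = g z" using \<delta>(2) by blast
    have hz: "h e = z" using h(3) z by simp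
    have "R z \<noteq> 0" using z(1) \<rho>(2) by (auto simp: S0_def)
    then have "Q z + e * R z = 0" using z(2) by (simp add: g_def field_simps)
    then show "Q (h e) + e * R (h e) = 0" using hz by simp
  qed
qed

lemma hol_smooth:
  fixes r :: "complex \<Rightarrow> complex"
  assumes hol: "r holomorphic_on ball 0 \<delta>"
  shows "smooth_on {-\<delta><..<\<delta>} (\<lambda>x. r (of_real x))"
  unfolding smooth_on_def
proof (intro exI conjI allI ballI)
  show "(\<lambda>n x. (deriv ^^ n) r (complex_of_real x)) 0 = (\<lambda>x. r (of_real x))" by simp
  fix n :: nat and x :: real assume x: "x \<in> {-\<delta><..<\<delta>}"
  have xb: "complex_of_real x \<in> ball 0 \<delta>" using x by (simp add: abs_less_iff)
  have "((deriv ^^ n) r has_field_derivative deriv ((deriv ^^ n) r) (of_real x)) (at (of_real x))"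
    by (rule holomorphic_derivI[OF holomorphic_higher_deriv[OF hol open_ball] open_ball xb])
  then show "((\<lambda>x. (deriv ^^ n) r (complex_of_real x)) has_vector_derivative
          (\<lambda>x. (deriv ^^ Suc n) r (complex_of_real x)) x) (at x within {-\<delta><..<\<delta>})"
    using has_vector_derivative_real_field by fastforce
qed

lemma hol_taylor:
  fixes r :: "complex \<Rightarrow> complex"
  assumes hol: "r holomorphic_on ball 0 \<delta>" and d: "\<delta> > 0"
  shows "\<exists>B. \<forall>e. cmod e \<le> \<delta>/2 \<longrightarrow> cmod (r e - (r 0 + deriv r 0 * e)) \<le> B * cmod e ^ 2"
proof -
  define S where "S = cball (0::complex) (\<delta>/2)"
  have Ssub: "S \<subseteq> ball 0 \<delta>" using d by (auto simp: S_def)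
  have h2: "(deriv ^^ 2) r holomorphic_on ball 0 \<delta>" by (rule holomorphic_higher_deriv[OF hol open_ball])
  have "continuous_on S ((deriv ^^ 2) r)"
    using holomorphic_on_imp_continuous_on[OF h2] Ssub continuous_on_subset by blast
  then have "compact (((deriv ^^ 2) r) ` S)" by (intro compact_continuous_image) (auto simp: S_def)
  then obtain B where B: "\<And>y. y \<in> ((deriv ^^ 2) r) ` S \<Longrightarrow> norm y \<le> B"
    using compact_imp_bounded bounded_iff by metis
  show ?thesis
  proof (intro exI allI impI)
    fix e :: complex assume e: "cmod e \<le> \<delta>/2"
    have "cmod ((\<lambda>i. (deriv ^^ i) r) 0 e - (\<Sum>i\<le>1. (\<lambda>i. (deriv ^^ i) r) i 0 * (e - 0) ^ i / fact i))
          \<le> B * cmod (e - 0) ^ Suc 1 / fact 1"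
    proof (rule complex_Taylor[of S 1 "\<lambda>i. (deriv ^^ i) r" B 0 e])
      show "convex S" by (simp add: S_def)
      fix i :: nat and x assume x: "x \<in> S" and i: "i \<le> 1"
      show "((deriv ^^ i) r has_field_derivative (deriv ^^ Suc i) r x) (at x within S)"
        using holomorphic_derivI[OF holomorphic_higher_deriv[OF hol open_ball] open_ball] x Ssub by auto
    next
      fix x assume "x \<in> S" then show "cmod ((deriv ^^ Suc 1) r x) \<le> B" using B by (simp add: numeral_2_eq_2)
    next
      show "0 \<in> S" using d by (simp add: S_def)
      show "e \<in> S" using e by (simp add: S_def)
    qed
    then show "cmod (r e - (r 0 + deriv r 0 * e)) \<le> B * cmod e ^ 2" by (simp add: power2_eq_square)
  qed
qed



lemma cubic_factor:
  fixes b cc dd r1 r2 r3 :: complex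
  assumes d12: "r1 \<noteq> r2" and d13: "r1 \<noteq> r3" and d23: "r2 \<noteq> r3"
    and h1: "r1^3 + b*r1^2 + cc*r1 + dd = 0"
    and h2: "r2^3 + b*r2^2 + cc*r2 + dd = 0"
    and h3: "r3^3 + b*r3^2 + cc*r3 + dd = 0"
  shows "X^3 + b*X^2 + cc*X + dd = (X - r1) * (X - r2) * (X - r3)"
proof -
  have "(r1 - r2) * (r1^2 + r1*r2 + r2^2 + b*(r1+r2) + cc) = (r1^3 + b*r1^2 + cc*r1 + dd) - (r2^3 + b*r2^2 + cc*r2 + dd)"
    by algebra
  then have e12: "r1^2 + r1*r2 + r2^2 + b*(r1+r2) + cc = 0" using d12 h1 h2 by simp
  have "(r1 - r3) * (r1^2 + r1*r3 + r3^2 + b*(r1+r3) + cc) = (r1^3 + b*r1^2 + cc*r1 + dd) - (r3^3 + b*r3^2 + cc*r3 + dd)"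
    by algebra
  then have e13: "r1^2 + r1*r3 + r3^2 + b*(r1+r3) + cc = 0" using d13 h1 h3 by simp
  have "(r2 - r3) * (r1 + r2 + r3 + b) = (r1^2 + r1*r2 + r2^2 + b*(r1+r2) + cc) - (r1^2 + r1*r3 + r3^2 + b*(r1+r3) + cc)"
    by algebra
  then have "r1 + r2 + r3 + b = 0" using e12 e13 d23 by simp
  then have sb: "b = - (r1 + r2 + r3)" by algebra
  have sc: "cc = r1*r2 + r1*r3 + r2*r3" using e12 unfolding sb by algebra
  have sd: "dd = - r1*r2*r3" using h1 unfolding sb sc by algebra
  show ?thesis unfolding sb sc sd by algebra
qed



lemma alg_facts:
  fixes K C G ck :: complex
  assumes ck2: "ck^2 = C^2 - K^2" and ii: "\<i>^2 = -1"
  shows "(- \<i>*K - ck)^3 + 2*\<i>*K*(- \<i>*K - ck)^2 - C^2*(- \<i>*K - ck) = 0"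
    and "(- \<i>*K + ck)^3 + 2*\<i>*K*(- \<i>*K + ck)^2 - C^2*(- \<i>*K + ck) = 0"
    and "3*G*\<i>*K/2*(- \<i>*K - ck)^2 - 3*G*K^2*(- \<i>*K - ck) - 3*\<i>*K*C^2/2 = 3*\<i>*K*C^2/2*(G-1)"
    and "3*G*\<i>*K/2*(- \<i>*K + ck)^2 - 3*G*K^2*(- \<i>*K + ck) - 3*\<i>*K*C^2/2 = 3*\<i>*K*C^2/2*(G-1)"
    and "3*(- \<i>*K - ck)^2 + 4*\<i>*K*(- \<i>*K - ck) - C^2 = 2*ck*(ck + \<i>*K)"
    and "3*(- \<i>*K + ck)^2 + 4*\<i>*K*(- \<i>*K + ck) - C^2 = 2*ck*(ck - \<i>*K)"
    and "(ck + \<i>*K) * (ck - \<i>*K) = C^2"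
    and "(K + \<i>*ck) * (ck + \<i>*K) = \<i>*C^2"
    and "(K - \<i>*ck) * (ck - \<i>*K) = - \<i>*C^2"
  using assms by algebra+


lemma local_root':
  fixes Q R :: "complex \<Rightarrow> complex"
  assumes holQ: "Q holomorphic_on UNIV" and holR: "R holomorphic_on UNIV"
    and Q0: "Q \<xi> = 0"
    and dQ: "(Q has_field_derivative q) (at \<xi>)" and q0: "q \<noteq> 0"
  shows "\<exists>\<delta>>0. \<exists>r. r holomorphic_on ball 0 \<delta> \<and> r 0 = \<xi> \<and> deriv r 0 = - R \<xi> / q \<and>
           (\<forall>e\<in>ball 0 \<delta>. Q (r e) + e * R (r e) = 0)"
proof (cases "R \<xi> = 0")
  case True
  show ?thesis
  proof (intro exI conjI ballI)
    show "(1::real) > 0" by simp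
    show "(\<lambda>_. \<xi>) holomorphic_on ball 0 1" by simp
    show "(\<lambda>_. \<xi>) 0 = \<xi>" by simp
    show "deriv (\<lambda>_. \<xi>) 0 = - R \<xi> / q" using True by simp
    fix e :: complex show "Q \<xi> + e * R \<xi> = 0" using True Q0 by simp
  qed
next
  case False
  then show ?thesis using local_root[OF holQ holR Q0 False dQ q0] by blast
qed

lemma near:
  fixes r :: "complex \<Rightarrow> complex"
  assumes hol: "r holomorphic_on ball 0 \<delta>" and d: "\<delta> > 0" and eta: "\<eta> > 0"
  shows "\<exists>d>0. \<forall>e. cmod e < d \<longrightarrow> cmod (r e - r 0) < \<eta>"
proof -
  have "continuous_on (ball 0 \<delta>) r" using hol holomorphic_on_imp_continuous_on by blast
  then obtain d0 where d0: "d0 > 0" "\<forall>x'\<in>ball 0 \<delta>. dist x' 0 < d0 \<longrightarrow> dist (r x') (r 0) < \<eta>"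
    using d eta unfolding continuous_on_iff by (metis centre_in_ball)
  show ?thesis
  proof (intro exI conjI allI impI)
    show "min d0 \<delta> > 0" using d0 d by simp
    fix e :: complex assume "cmod e < min d0 \<delta>"
    then show "cmod (r e - r 0) < \<eta>" using d0(2) by (simp add: dist_norm)
  qed
qed

lemma sep:
  fixes a b x y :: complex
  assumes "cmod (a - x) < D/2" "cmod (b - y) < D/2" "D \<le> cmod (x - y)"
  shows "a \<noteq> b"
proof
  assume "a = b"
  then have "x - y = (b - y) - (a - x)" by simp
  then have "cmod (x - y) \<le> cmod (b - y) + cmod (a - x)" by (metis norm_triangle_ineq4)
  then show False using assms by simp
qed

lemma root_bigo:
  fixes r :: "complex \<Rightarrow> complex" and T :: "real \<Rightarrow> complex"
  assumes hol: "r holomorphic_on ball 0 \<delta>" and d: "\<delta> > 0"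
    and T: "\<And>Pr. T Pr = r 0 + deriv r 0 * of_real (1 / Pr)"
  shows "(\<lambda>Pr. r (of_real (1 / Pr)) - T Pr) \<in> O[at_top](\<lambda>Pr. of_real (1 / Pr ^ 2))"
proof -
  obtain B where B: "\<And>e. cmod e \<le> \<delta>/2 \<Longrightarrow> cmod (r e - (r 0 + deriv r 0 * e)) \<le> B * cmod e ^ 2"
    using hol_taylor[OF hol d] by blast
  have "eventually (\<lambda>Pr. Pr > 2 / \<delta>) at_top" by (rule eventually_gt_at_top)
  then have "eventually (\<lambda>Pr. norm (r (of_real (1 / Pr)) - T Pr) \<le> B * norm (of_real (1 / Pr ^ 2) :: complex)) at_top"
  proof (rule eventually_mono)
    fix Pr :: real assume Pr: "Pr > 2 / \<delta>"
    have Pr0: "Pr > 0" using Pr d by (smt (verit) divide_pos_pos)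
    have "1 / Pr \<le> \<delta> / 2" using Pr Pr0 d by (simp add: field_simps)
    then have "cmod (complex_of_real (1 / Pr)) \<le> \<delta>/2" using Pr0 by (simp only: norm_of_real) simp
    note this' = this
    show "norm (r (of_real (1 / Pr)) - T Pr) \<le> B * norm (of_real (1 / Pr ^ 2) :: complex)"
    proof -
      have "norm (of_real (1 / Pr ^ 2) :: complex) = cmod (complex_of_real (1 / Pr)) ^ 2"
        by (simp only: norm_of_real) (simp add: power_divide)
      then show ?thesis using B[OF this'] by (simp only: T)
    qed
  qed
  then show ?thesis by (rule bigoI)
qed

theorem proposition1:
  fixes k a1 c \<gamma> :: real and ck :: complex
  assumes "k \<noteq> 0" and "a1 > 0" and "c > 0" and "\<gamma> \<ge> 1"
    and "c ^ 2 \<noteq> k ^ 2 * a1 ^ 2"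
    and "ck ^ 2 = of_real (c ^ 2 - k ^ 2 * a1 ^ 2)"
  shows "\<exists>\<delta>>0. \<exists>Xm X0 Xp :: real \<Rightarrow> complex.
           smooth_on {-\<delta><..<\<delta>} Xm \<and> smooth_on {-\<delta><..<\<delta>} X0 \<and> smooth_on {-\<delta><..<\<delta>} Xp \<and>
           (\<forall>Pr. Pr > 1 / \<delta> \<longrightarrow>
              (\<forall>X. disp_poly k a1 c \<gamma> Pr X
                     = (X - Xm (1 / Pr)) * (X - X0 (1 / Pr)) * (X - Xp (1 / Pr)))) \<and>
           (\<lambda>Pr. Xm (1 / Pr) - (- \<i> * of_real k * of_real a1 - ck
                 - 3 * (of_real \<gamma> - 1) * of_real k * of_real a1 * (of_real k * of_real a1 + \<i> * ck)
                   / (4 * ck) * of_real (1 / Pr)))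
             \<in> O[at_top](\<lambda>Pr. of_real (1 / Pr ^ 2)) \<and>
           (\<lambda>Pr. Xp (1 / Pr) - (- \<i> * of_real k * of_real a1 + ck
                 + 3 * (of_real \<gamma> - 1) * of_real k * of_real a1 * (of_real k * of_real a1 - \<i> * ck)
                   / (4 * ck) * of_real (1 / Pr)))
             \<in> O[at_top](\<lambda>Pr. of_real (1 / Pr ^ 2)) \<and>
           (\<lambda>Pr. X0 (1 / Pr) - (- \<i> * 3 * of_real k * of_real a1 / (2 * of_real Pr)))
             \<in> O[at_top](\<lambda>Pr. of_real (1 / Pr ^ 2))"
proof -
  define K where "K = complex_of_real k * of_real a1"
  define C where "C = complex_of_real c"
  define G where "G = complex_of_real \<gamma>"
  define Q where "Q = (\<lambda>X::complex. X^3 + 2*\<i>*K*X^2 - C^2*X)"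
  define R where "R = (\<lambda>X::complex. 3*G*\<i>*K/2*X^2 - 3*G*K^2*X - 3*\<i>*K*C^2/2)"
  define \<xi>m where "\<xi>m = - \<i>*K - ck"
  define \<xi>p where "\<xi>p = - \<i>*K + ck"
  have ck2: "ck^2 = C^2 - K^2" using assms(6) by (simp add: K_def C_def power_mult_distrib)
  have ii: "\<i>^2 = -1" by simp
  note af = alg_facts[OF ck2 ii]
  have Knz: "K \<noteq> 0" using assms(1,2) by (simp add: K_def)
  have Cnz: "C \<noteq> 0" using assms(3) by (simp add: C_def)
  have "c ^ 2 - k ^ 2 * a1 ^ 2 \<noteq> 0" using assms(5) by simp
  then have cknz: "ck \<noteq> 0" using assms(6) by (metis of_real_eq_0_iff zero_power2)
  have f1: "ck + \<i>*K \<noteq> 0" using af(7) Cnz by auto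
  have f2: "ck - \<i>*K \<noteq> 0" using af(7) Cnz by auto
  have holQ: "Q holomorphic_on UNIV" unfolding Q_def by (intro holomorphic_intros)
  have holR: "R holomorphic_on UNIV" unfolding R_def by (intro holomorphic_intros)
  have dQ: "(Q has_field_derivative (3*\<xi>^2 + 4*\<i>*K*\<xi> - C^2)) (at \<xi>)" for \<xi>
    unfolding Q_def by (auto intro!: derivative_eq_intros simp: algebra_simps power2_eq_square)
  have Q00: "Q 0 = 0" by (simp add: Q_def)
  obtain \<delta>0 r0 where r0: "\<delta>0 > 0" "r0 holomorphic_on ball 0 \<delta>0" "r0 0 = 0"
      "deriv r0 0 = - R 0 / (3*0^2 + 4*\<i>*K*0 - C^2)" "\<forall>e\<in>ball 0 \<delta>0. Q (r0 e) + e * R (r0 e) = 0"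
    using local_root'[OF holQ holR Q00 dQ[of 0]] Cnz by auto
  have d0: "deriv r0 0 = - \<i>*3*K/2" using r0(4) Cnz by (simp add: R_def field_simps)
  have Qm: "Q \<xi>m = 0" using af(1) by (simp add: Q_def \<xi>m_def)
  have qm: "3*\<xi>m^2 + 4*\<i>*K*\<xi>m - C^2 = 2*ck*(ck + \<i>*K)" using af(5) by (simp add: \<xi>m_def)
  have qmnz: "3*\<xi>m^2 + 4*\<i>*K*\<xi>m - C^2 \<noteq> 0" using qm cknz f1 by simp
  obtain \<delta>m rm where rm: "\<delta>m > 0" "rm holomorphic_on ball 0 \<delta>m" "rm 0 = \<xi>m"
      "deriv rm 0 = - R \<xi>m / (3*\<xi>m^2 + 4*\<i>*K*\<xi>m - C^2)" "\<forall>e\<in>ball 0 \<delta>m. Q (rm e) + e * R (rm e) = 0"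
    using local_root'[OF holQ holR Qm dQ[of \<xi>m] qmnz] by auto
  have Rm: "R \<xi>m = 3*\<i>*K*C^2/2*(G-1)" unfolding R_def \<xi>m_def by (rule af(3))
  have dm: "deriv rm 0 = - (3 * (G - 1) * K * (K + \<i> * ck) / (4 * ck))"
  proof -
    have "deriv rm 0 = - (3*\<i>*K*C^2/2*(G-1)) / (2*ck*(ck + \<i>*K))" using rm(4) Rm qm by simp
    also have "\<dots> = - (3 * (G - 1) * K * (\<i>*C^2) / (4 * ck * (ck + \<i>*K)))"
      by (simp add: field_simps)
    also have "\<dots> = - (3 * (G - 1) * K * ((K + \<i>*ck) * (ck + \<i>*K)) / (4 * ck * (ck + \<i>*K)))"
      using af(8) by simp
    also have "\<dots> = - ((3 * (G - 1) * K * (K + \<i>*ck)) * (ck + \<i>*K) / ((4 * ck) * (ck + \<i>*K)))"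
      by (simp only: mult.assoc)
    also have "\<dots> = - (3 * (G - 1) * K * (K + \<i> * ck) / (4 * ck))"
      by (simp only: nonzero_mult_divide_mult_cancel_right[OF f1])
    finally show ?thesis .
  qed
  have Qp: "Q \<xi>p = 0" using af(2) by (simp add: Q_def \<xi>p_def)
  have qp: "3*\<xi>p^2 + 4*\<i>*K*\<xi>p - C^2 = 2*ck*(ck - \<i>*K)" using af(6) by (simp add: \<xi>p_def)
  have qpnz: "3*\<xi>p^2 + 4*\<i>*K*\<xi>p - C^2 \<noteq> 0" using qp cknz f2 by simp
  obtain \<delta>p rp where rp: "\<delta>p > 0" "rp holomorphic_on ball 0 \<delta>p" "rp 0 = \<xi>p"
      "deriv rp 0 = - R \<xi>p / (3*\<xi>p^2 + 4*\<i>*K*\<xi>p - C^2)" "\<forall>e\<in>ball 0 \<delta>p. Q (rp e) + e * R (rp e) = 0"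
    using local_root'[OF holQ holR Qp dQ[of \<xi>p] qpnz] by auto
  have Rp: "R \<xi>p = 3*\<i>*K*C^2/2*(G-1)" unfolding R_def \<xi>p_def by (rule af(4))
  have dp: "deriv rp 0 = 3 * (G - 1) * K * (K - \<i> * ck) / (4 * ck)"
  proof -
    have "deriv rp 0 = - (3*\<i>*K*C^2/2*(G-1)) / (2*ck*(ck - \<i>*K))" using rp(4) Rp qp by simp
    also have "\<dots> = 3 * (G - 1) * K * (- \<i>*C^2) / (4 * ck * (ck - \<i>*K))"
      by (simp add: minus_divide_left algebra_simps)
    also have "\<dots> = 3 * (G - 1) * K * ((K - \<i>*ck) * (ck - \<i>*K)) / (4 * ck * (ck - \<i>*K))"
      using af(9) by simp
    also have "\<dots> = (3 * (G - 1) * K * (K - \<i>*ck)) * (ck - \<i>*K) / ((4 * ck) * (ck - \<i>*K))"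
      by (simp only: mult.assoc)
    also have "\<dots> = 3 * (G - 1) * K * (K - \<i> * ck) / (4 * ck)"
      by (simp only: nonzero_mult_divide_mult_cancel_right[OF f2])
    finally show ?thesis .
  qed
  define D where "D = min (cmod (\<xi>m - 0)) (min (cmod (\<xi>m - \<xi>p)) (cmod (0 - \<xi>p)))"
  have "\<xi>m - 0 = - (ck + \<i>*K)" by (simp add: \<xi>m_def)
  then have "\<xi>m - 0 \<noteq> 0" using f1 by (metis neg_equal_0_iff_equal)
  moreover have "\<xi>m - \<xi>p \<noteq> 0" using cknz by (simp add: \<xi>m_def \<xi>p_def)
  moreover have "0 - \<xi>p = - (ck - \<i>*K)" by (simp add: \<xi>p_def)
  then have "0 - \<xi>p \<noteq> 0" using f2 by (metis neg_equal_0_iff_equal)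
  moreover note \<open>0 - \<xi>p \<noteq> 0\<close>
  ultimately have Dpos: "D > 0" by (simp add: D_def)
  obtain e0 where e0: "e0 > 0" "\<forall>e. cmod e < e0 \<longrightarrow> cmod (r0 e - r0 0) < D/2"
    using near[OF r0(2) r0(1), of "D/2"] Dpos by auto
  obtain em where em: "em > 0" "\<forall>e. cmod e < em \<longrightarrow> cmod (rm e - rm 0) < D/2"
    using near[OF rm(2) rm(1), of "D/2"] Dpos by auto
  obtain ep where ep: "ep > 0" "\<forall>e. cmod e < ep \<longrightarrow> cmod (rp e - rp 0) < D/2"
    using near[OF rp(2) rp(1), of "D/2"] Dpos by auto
  define \<delta> where "\<delta> = min (min \<delta>0 \<delta>m) (min \<delta>p (min e0 (min em ep)))"
  have \<delta>pos: "\<delta> > 0" using r0(1) rm(1) rp(1) e0(1) em(1) ep(1) by (simp add: \<delta>_def)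
  have sub0: "ball 0 \<delta> \<subseteq> ball 0 \<delta>0" and subm: "ball 0 \<delta> \<subseteq> ball 0 \<delta>m" and subp: "ball 0 \<delta> \<subseteq> ball 0 \<delta>p"
    by (auto simp: \<delta>_def)
  have fact: "disp_poly k a1 c \<gamma> Pr X = (X - rm (of_real (1/Pr))) * (X - r0 (of_real (1/Pr))) * (X - rp (of_real (1/Pr)))"
    if Pr: "Pr > 1 / \<delta>" for Pr X
  proof -
    have Pr0: "Pr > 0" using Pr \<delta>pos by (smt (verit) divide_pos_pos)
    define e where "e = complex_of_real (1 / Pr)"
    have "1 / Pr < \<delta>" using Pr Pr0 \<delta>pos by (simp add: field_simps)
    then have ce: "cmod e < \<delta>" using Pr0 unfolding e_def by (simp only: norm_of_real) simp
    then have eb: "e \<in> ball 0 \<delta>" by simp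
    define b where "b = 2*\<i>*K*(1 + 3*G*e/4)"
    define cc where "cc = - (C^2 + 3*G*e*K^2)"
    define dd where "dd = - (\<i>*3*K*C^2*e/2)"
    have QR: "Q Y + e * R Y = Y^3 + b*Y^2 + cc*Y + dd" for Y
      unfolding Q_def R_def b_def cc_def dd_def by (simp add: algebra_simps)
    have DP: "disp_poly k a1 c \<gamma> Pr Y = Y^3 + b*Y^2 + cc*Y + dd" for Y
      unfolding disp_poly_def b_def cc_def dd_def e_def K_def C_def G_def using Pr0
      by (simp add: field_simps)
    have "e \<in> ball 0 \<delta>0" using eb sub0 by blast
    then have "Q (r0 e) + e * R (r0 e) = 0" using r0(5) by blast
    then have h0: "(r0 e)^3 + b*(r0 e)^2 + cc*(r0 e) + dd = 0" by (simp only: QR)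
    have "e \<in> ball 0 \<delta>m" using eb subm by blast
    then have "Q (rm e) + e * R (rm e) = 0" using rm(5) by blast
    then have hm: "(rm e)^3 + b*(rm e)^2 + cc*(rm e) + dd = 0" by (simp only: QR)
    have "e \<in> ball 0 \<delta>p" using eb subp by blast
    then have "Q (rp e) + e * R (rp e) = 0" using rp(5) by blast
    then have hp: "(rp e)^3 + b*(rp e)^2 + cc*(rp e) + dd = 0" by (simp only: QR)
    have n0: "cmod (r0 e - 0) < D/2" using e0(2) ce r0(3) by (simp add: \<delta>_def)
    have nm: "cmod (rm e - \<xi>m) < D/2" using em(2) ce rm(3) by (simp add: \<delta>_def)
    have np: "cmod (rp e - \<xi>p) < D/2" using ep(2) ce rp(3) by (simp add: \<delta>_def)
    have "rm e \<noteq> r0 e" by (rule sep[OF nm n0]) (simp add: D_def)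
    moreover have "rm e \<noteq> rp e" by (rule sep[OF nm np]) (simp add: D_def)
    moreover have "r0 e \<noteq> rp e" by (rule sep[OF n0 np]) (simp add: D_def)
    ultimately show ?thesis unfolding DP e_def[symmetric]
      by (intro cubic_factor hm h0 hp)
  qed
  have S1: "smooth_on {-\<delta><..<\<delta>} (\<lambda>x. rm (of_real x))"
    by (rule hol_smooth) (rule holomorphic_on_subset[OF rm(2) subm])
  have S2: "smooth_on {-\<delta><..<\<delta>} (\<lambda>x. r0 (of_real x))"
    by (rule hol_smooth) (rule holomorphic_on_subset[OF r0(2) sub0])
  have S3: "smooth_on {-\<delta><..<\<delta>} (\<lambda>x. rp (of_real x))"
    by (rule hol_smooth) (rule holomorphic_on_subset[OF rp(2) subp])
  have F: "\<forall>Pr. Pr > 1 / \<delta> \<longrightarrow> (\<forall>X. disp_poly k a1 c \<gamma> Pr X = (X - rm (of_real (1/Pr))) * (X - r0 (of_real (1/Pr))) * (X - rp (of_real (1/Pr))))"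
    using fact by blast
  have O1: "(\<lambda>Pr. rm (of_real (1 / Pr)) - (- \<i> * of_real k * of_real a1 - ck
               - 3 * (of_real \<gamma> - 1) * of_real k * of_real a1 * (of_real k * of_real a1 + \<i> * ck)
                 / (4 * ck) * of_real (1 / Pr)))
           \<in> O[at_top](\<lambda>Pr. of_real (1 / Pr ^ 2))"
    by (rule root_bigo[OF rm(2) rm(1)]) (simp add: rm(3) dm \<xi>m_def K_def G_def algebra_simps)
  have O2: "(\<lambda>Pr. rp (of_real (1 / Pr)) - (- \<i> * of_real k * of_real a1 + ck
               + 3 * (of_real \<gamma> - 1) * of_real k * of_real a1 * (of_real k * of_real a1 - \<i> * ck)
                 / (4 * ck) * of_real (1 / Pr)))
           \<in> O[at_top](\<lambda>Pr. of_real (1 / Pr ^ 2))"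
    by (rule root_bigo[OF rp(2) rp(1)]) (simp add: rp(3) dp \<xi>p_def K_def G_def algebra_simps)
  have O3: "(\<lambda>Pr. r0 (of_real (1 / Pr)) - (- \<i> * 3 * of_real k * of_real a1 / (2 * of_real Pr)))
           \<in> O[at_top](\<lambda>Pr. of_real (1 / Pr ^ 2))"
    by (rule root_bigo[OF r0(2) r0(1)]) (simp add: r0(3) d0 K_def field_simps)
  show ?thesis
    apply (rule exI[of _ \<delta>], rule conjI[OF \<delta>pos])
    apply (rule exI[of _ "\<lambda>x. rm (of_real x)"], rule exI[of _ "\<lambda>x. r0 (of_real x)"], rule exI[of _ "\<lambda>x. rp (of_real x)"])
    using S1 S2 S3 F O1 O2 O3 by (intro conjI) assumption+
qed

end
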